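(* Let $(\mathcal{P},d)$ be a tree metric given by the weighted tree $T$, let $G$ be any directed network on $\mathcal{P}$ (arc $(x,y)$ of length $d(x,y)$), and let $u\neq v$ be in $\mathcal{P}$. Then every node other than $u$ on any greedy path from $u$ to $v$ in $G$ lies in the connected component of $T-u$ that contains $v$.
   Context: A tree metric on a finite set $\mathcal{P}$ is given by a spanning tree $T$ on vertex set $\mathcal{P}$ with positive edge weights; $d(x,y)=d_T(x,y)$ is the total weight of the unique $x$–$y$ path in $T$. $T-u$ is the forest obtained by deleting $u$ (its components are the subtrees hanging below $u$ when $T$ is rooted at $u$). A greedy path from $u$ to $v$ in $G$ is a directed path $u=x_1,\dots,x_j=v$ of arcs of $G$ with $d(x_i,v)>d(x_{i+1},v)$ for all $i$. *)

theory Defs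
  imports Main "HOL-Library.Cardinality" Complex_Main
begin

definition is_walk :: "('a \<Rightarrow> 'a \<Rightarrow> bool) \<Rightarrow> 'a list \<Rightarrow> bool" where
  "is_walk E xs \<longleftrightarrow> xs \<noteq> [] \<and> (\<forall>i. Suc i < length xs \<longrightarrow> E (xs ! i) (xs ! Suc i))"

definition is_path :: "('a \<Rightarrow> 'a \<Rightarrow> bool) \<Rightarrow> 'a list \<Rightarrow> 'a \<Rightarrow> 'a \<Rightarrow> bool" where
  "is_path E xs x y \<longleftrightarrow> is_walk E xs \<and> distinct xs \<and> hd xs = x \<and> last xs = y"

definition is_cycle :: "('a \<Rightarrow> 'a \<Rightarrow> bool) \<Rightarrow> 'a list \<Rightarrow> bool" where
  "is_cycle E xs \<longleftrightarrow> length xs \<ge> 3 \<and> is_walk E xs \<and> distinct xs \<and> E (last xs) (hd xs)"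

definition is_tree :: "'a set \<Rightarrow> ('a \<Rightarrow> 'a \<Rightarrow> bool) \<Rightarrow> bool" where
  "is_tree P E \<longleftrightarrow> finite P \<and> P \<noteq> {}
     \<and> (\<forall>x y. E x y \<longrightarrow> x \<in> P \<and> y \<in> P \<and> x \<noteq> y \<and> E y x)
     \<and> (\<forall>x\<in>P. \<forall>y\<in>P. \<exists>xs. is_path E xs x y)
     \<and> \<not> (\<exists>xs. is_cycle E xs)"

definition pos_weights :: "('a \<Rightarrow> 'a \<Rightarrow> bool) \<Rightarrow> ('a \<Rightarrow> 'a \<Rightarrow> real) \<Rightarrow> bool" where
  "pos_weights E w \<longleftrightarrow> (\<forall>x y. E x y \<longrightarrow> w x y > 0 \<and> w x y = w y x)"

definition walk_weight :: "('a \<Rightarrow> 'a \<Rightarrow> real) \<Rightarrow> 'a list \<Rightarrow> real" where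
  "walk_weight w xs = (\<Sum>i<length xs - 1. w (xs ! i) (xs ! Suc i))"

(* tree metric: total weight of the unique x-y path in T *)
definition tree_dist :: "('a \<Rightarrow> 'a \<Rightarrow> bool) \<Rightarrow> ('a \<Rightarrow> 'a \<Rightarrow> real) \<Rightarrow> 'a \<Rightarrow> 'a \<Rightarrow> real" where
  "tree_dist E w x y = walk_weight w (THE xs. is_path E xs x y)"

definition del_vertex :: "('a \<Rightarrow> 'a \<Rightarrow> bool) \<Rightarrow> 'a \<Rightarrow> 'a \<Rightarrow> 'a \<Rightarrow> bool" where
  "del_vertex E u = (\<lambda>x y. E x y \<and> x \<noteq> u \<and> y \<noteq> u)"

definition component_del :: "'a set \<Rightarrow> ('a \<Rightarrow> 'a \<Rightarrow> bool) \<Rightarrow> 'a \<Rightarrow> 'a \<Rightarrow> 'a set" where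
  "component_del P E u v = {z \<in> P - {u}. \<exists>xs. is_path (del_vertex E u) xs v z}"

definition greedy_path :: "('a \<times> 'a) set \<Rightarrow> ('a \<Rightarrow> 'a \<Rightarrow> real) \<Rightarrow> 'a list \<Rightarrow> 'a \<Rightarrow> 'a \<Rightarrow> bool" where
  "greedy_path A d xs u v \<longleftrightarrow> xs \<noteq> [] \<and> hd xs = u \<and> last xs = v
     \<and> (\<forall>i. Suc i < length xs \<longrightarrow> (xs ! i, xs ! Suc i) \<in> A \<and> d (xs ! i) v > d (xs ! Suc i) v)"

end

theory Submission
  imports Defs
begin

lemma is_walk_iff: "is_walk E xs \<longleftrightarrow> xs \<noteq> [] \<and> successively E xs"
  by (simp add: is_walk_def successively_conv_nth)

lemma path_unique:
  assumes sym: "\<forall>x y. E x y \<longrightarrow> E y x" and nocyc: "\<not>(\<exists>c. is_cycle E c)"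
  shows "is_path E p x y \<Longrightarrow> is_path E q x y \<Longrightarrow> p = q"
proof (induction "length p + length q" arbitrary: p q x rule: less_induct)
  case less
  from less.prems obtain p' where p: "p = x # p'"
    by (cases p) (auto simp: is_path_def is_walk_def)
  from less.prems obtain q' where q: "q = x # q'"
    by (cases q) (auto simp: is_path_def is_walk_def)
  show ?case
  proof (cases "p' = [] \<or> q' = []")
    case True
    then show ?thesis using less.prems p q
      by (auto simp: is_path_def) (metis last_in_set)+
  next
    case False
    then have ne: "p' \<noteq> []" "q' \<noteq> []" by auto
    have pp: "is_path E p' (hd p') y" and qp: "is_path E q' (hd q') y"
      using less.prems p q ne by (auto simp: is_path_def is_walk_iff successively_Cons)
    show ?thesis
    proof (cases "hd p' = hd q'")
      case True
      then have "p' = q'" using less.hyps[of p' q' "hd p'"] pp qp p q by auto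
      then show ?thesis using p q by simp
    next
      case hne: False
      have "y \<in> set p'" "y \<in> set q'" using pp qp ne by (auto simp: is_path_def) (metis last_in_set)+
      then have "\<exists>c\<in>set q'. c \<in> set p'" by blast
      from split_list_first_prop[OF this] obtain q1 c q2 where
        q'eq: "q' = q1 @ c # q2" and cp: "c \<in> set p'" and q1d: "\<forall>t\<in>set q1. t \<notin> set p'" by blast
      from split_list[OF cp] obtain p1 p2 where p'eq: "p' = p1 @ c # p2" by blast
      define C where "C = x # p1 @ c # rev q1"
      have Ep: "successively E p" and Eq: "successively E q"
        and dp: "distinct p" and dq: "distinct q"
        using less.prems by (auto simp: is_path_def is_walk_iff)
      have len: "length C \<ge> 3"
      proof -
        have "p1 \<noteq> [] \<or> q1 \<noteq> []" using hne p'eq q'eq by auto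
        then show ?thesis by (cases p1; cases q1; auto simp: C_def)
      qed
      have dist: "distinct C"
        using dp dq q1d p'eq q'eq p q by (auto simp: C_def)
      have w1: "successively E (x # p1 @ [c])"
        proof -
        have "p = (x # p1 @ [c]) @ p2" using p p'eq by simp
        then show ?thesis using Ep successively_append_iff by metis
      qed
      have w2: "successively E (c # rev q1)"
      proof -
        have "q = (x # q1 @ [c]) @ q2" using q q'eq by simp
        then have "successively E (x # q1 @ [c])" using Eq successively_append_iff by metis
        then have "successively E (q1 @ [c])" by (auto simp: successively_Cons)
        then have "successively (\<lambda>a b. E b a) (c # rev q1)"
          by (metis rev.simps(2) rev_rev_ident successively_rev)
        then show ?thesis using sym by (auto elim: successively_mono)
      qed
      have wC: "successively E C"
        proof -
        have "C = (x # p1 @ [c]) @ rev q1" by (simp add: C_def)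
        moreover have "rev q1 = [] \<or> E c (hd (rev q1))" using w2 by (auto simp: successively_Cons)
        moreover have "successively E (rev q1)" using w2 by (auto simp: successively_Cons)
        moreover have "last (x # p1 @ [c]) = c" by simp
        ultimately show ?thesis using w1 successively_append_iff by metis
      qed
      have Exb: "E x (hd q')" using Eq q ne by (auto simp: successively_Cons)
      have closing: "E (last C) (hd C)"
      proof (cases "q1 = []")
        case True
        then show ?thesis using Exb sym q'eq by (auto simp: C_def)
      next
        case False
        then have "last C = hd q'" using q'eq by (auto simp: C_def last_rev)
        then show ?thesis using Exb sym by (auto simp: C_def)
      qed
      have "is_cycle E C" using len dist wC closing
        by (auto simp: is_cycle_def is_walk_iff C_def)
      then show ?thesis using nocyc by blast
    qed
  qed
qed

lemma ww_nil: "walk_weight w [] = 0" by (simp add: walk_weight_def)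
lemma ww_single: "walk_weight w [a] = 0" by (simp add: walk_weight_def)
lemma ww_cons2: "walk_weight w (a # b # xs) = w a b + walk_weight w (b # xs)"
  by (simp add: walk_weight_def sum.lessThan_Suc_shift del: sum.lessThan_Suc)

lemma ww_append: "walk_weight w (xs @ y # ys) = walk_weight w (xs @ [y]) + walk_weight w (y # ys)"
proof (induction xs rule: induct_list012)
  case 1 then show ?case by (simp add: ww_single)
next
  case (2 a) then show ?case by (simp add: ww_cons2 ww_single)
next
  case (3 a b zs) then show ?case by (simp add: ww_cons2)
qed

lemma ww_nonneg: "pos_weights E w \<Longrightarrow> successively E xs \<Longrightarrow> walk_weight w xs \<ge> 0"
proof (induction xs rule: induct_list012)
  case 1 then show ?case by (simp add: ww_nil)
next
  case (2 a) then show ?case by (simp add: ww_single)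
next
  case (3 a b zs) then show ?case
    by (auto simp: ww_cons2 pos_weights_def) (smt (verit))
qed

lemma key:
  assumes T: "is_tree P E" and pw: "pos_weights E w"
    and uP: "u \<in> P" and vP: "v \<in> P" and zP: "z \<in> P" and zu: "z \<noteq> u"
    and nc: "z \<notin> component_del P E u v"
  shows "tree_dist E w z v \<ge> tree_dist E w u v"
proof -
  have sym: "\<forall>x y. E x y \<longrightarrow> E y x" and nocyc: "\<not>(\<exists>c. is_cycle E c)"
    and conn: "\<forall>x\<in>P. \<forall>y\<in>P. \<exists>xs. is_path E xs x y"
    using T by (auto simp: is_tree_def)
  note uniq = path_unique[OF sym nocyc]
  from conn zP vP obtain p where p: "is_path E p z v" by blast
  have thep: "(THE xs. is_path E xs z v) = p" using p uniq by blast
  have "u \<in> set p"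
  proof (rule ccontr)
    assume un: "u \<notin> set p"
    have sp: "successively E p" using p by (auto simp: is_path_def is_walk_iff)
    have "successively (\<lambda>x y. del_vertex E u y x) p"
      using sp apply (rule successively_mono) using un sym by (auto simp: del_vertex_def)
    then have "is_path (del_vertex E u) (rev p) v z"
      using p by (auto simp: is_path_def is_walk_iff hd_rev last_rev)
    then show False using nc zP zu by (auto simp: component_del_def)
  qed
  then obtain p1 p2 where pe: "p = p1 @ u # p2" by (meson split_list)
  have sp: "successively E p" using p by (auto simp: is_path_def is_walk_iff)
  have s1: "successively E (p1 @ [u])" and s2: "successively E (u # p2)"
  proof -
    have "p = (p1 @ [u]) @ p2" using pe by simp
    then have a: "successively E (p1 @ [u])" and b: "p2 = [] \<or> E u (hd p2)" "successively E p2"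
      using sp successively_append_iff[of E "p1 @ [u]" p2] by auto
    show "successively E (p1 @ [u])" by (fact a)
    show "successively E (u # p2)" using b by (auto simp: successively_Cons)
  qed
  have "is_path E (u # p2) u v"
    using p pe s2 by (auto simp: is_path_def is_walk_iff)
  then have theu: "(THE xs. is_path E xs u v) = u # p2" using uniq by blast
  have "tree_dist E w z v = walk_weight w (p1 @ [u]) + walk_weight w (u # p2)"
    unfolding tree_dist_def thep pe by (rule ww_append)
  moreover have "walk_weight w (p1 @ [u]) \<ge> 0" using ww_nonneg[OF pw s1] .
  ultimately show ?thesis unfolding tree_dist_def[of E w u v] theu by simp
qed

theorem lemma3p1:
  fixes P :: "'a set" and E :: "'a \<Rightarrow> 'a \<Rightarrow> bool" and w :: "'a \<Rightarrow> 'a \<Rightarrow> real"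
    and A :: "('a \<times> 'a) set" and u v :: 'a and xs :: "'a list"
  assumes "is_tree P E" and "pos_weights E w"
    and "A \<subseteq> P \<times> P"
    and "u \<in> P" and "v \<in> P" and "u \<noteq> v"
    and "greedy_path A (tree_dist E w) xs u v"
  shows "\<forall>z \<in> set xs. z \<noteq> u \<longrightarrow> z \<in> component_del P E u v"
proof
  fix z assume z: "z \<in> set xs"
  let ?d = "tree_dist E w"
  have g: "xs \<noteq> []" "hd xs = u"
    "\<And>i. Suc i < length xs \<Longrightarrow> (xs ! i, xs ! Suc i) \<in> A \<and> ?d (xs ! i) v > ?d (xs ! Suc i) v"
    using assms(7) by (auto simp: greedy_path_def)
  have x0: "xs ! 0 = u" using g by (simp add: hd_conv_nth)
  have step: "\<And>i. Suc i < length xs \<Longrightarrow> ?d (xs ! Suc i) v < ?d u v \<and> xs ! Suc i \<in> P"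
  proof -
    fix i show "Suc i < length xs \<Longrightarrow> ?d (xs ! Suc i) v < ?d u v \<and> xs ! Suc i \<in> P"
    proof (induction i)
      case 0 then show ?case using g(3)[of 0] x0 assms(3) by auto
    next
      case (Suc i)
      then have "?d (xs ! Suc i) v < ?d u v" by simp
      then show ?case using g(3)[of "Suc i"] Suc.prems assms(3) by auto
    qed
  qed
  show "z \<noteq> u \<longrightarrow> z \<in> component_del P E u v"
  proof
    assume zu: "z \<noteq> u"
    from z obtain i where i: "i < length xs" "xs ! i = z" by (meson in_set_conv_nth)
    then obtain j where j: "i = Suc j" using zu x0 by (cases i) auto
    have "?d z v < ?d u v" "z \<in> P" using step[of j] i j by auto
    then show "z \<in> component_del P E u v"
      using key[OF assms(1,2,4,5) _ zu] by force
  qed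
qed

end
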